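(* Let $n \ge 1$ and let $\varphi : \mathbb{R} \to \mathbb{R}$ be a continuous activation function that can be uniformly approximated by one-to-one functions. If a function $g : \mathbb{R}^n \to \mathbb{R}$ is approximated by the family $\mathcal{N}_{\varphi, n}$, then $g$ is approximated by the family $\mathcal{N}^*_n$ of non-singular functions.
   Context: $\mathcal{N}_{\varphi,n}$ is the family of functions $\mathbb{R}^n \to \mathbb{R}$ defined by layered feed-forward networks with activation $\varphi$, input dimension $n$, output dimension 1, any finite number of hidden layers, each of width at most $n$; such a network with layer widths $n_0=n, n_1,\dots,n_{\kappa-1}, n_\kappa=1$ computes $\nu_\kappa\circ\ell_\kappa\circ\cdots\circ\nu_0\circ\ell_0$, where the $\ell_i$ are the affine maps given by the weights between consecutive layers and each $\nu_i$ applies the activation coordinatewise. The family $\mathcal{N}^*_n$ of non-singular functions is the union, over all continuous one-to-one activation functions $\psi:\mathbb{R}\to\mathbb{R}$, of the functions computed by such networks with activation $\psi$ in which every hidden layer has width exactly $n$, every weight matrix between two consecutive width-$n$ layers (including input to first hidden layer) is nonsingular, and the weight vector from the last hidden layer to the output is nonzero. An activation $\varphi$ is uniformly approximated by one-to-one functions if some sequence of continuous one-to-one functions converges uniformly on $\mathbb{R}$ to $\varphi$. A family $M$ approximates $g$ if for every compact $A\subset\mathbb{R}^n$ and $\epsilon>0$ there is $f\in M$ with $|f(x)-g(x)|<\epsilon$ for all $x\in A$. *)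

theory Defs
  imports "HOL-Analysis.Analysis"
begin

text \<open>Input space R^n is real^'n, n = CARD('n).  A hidden layer of width m \<le> n is
  represented by a nonempty set T of neuron labels (a subset of 'n with card T = m),
  a weight matrix W and a bias vector b; only the rows indexed by T and the columns
  indexed by the previous layer's labels are used.\<close>

type_synonym 'n layer = "'n set \<times> (real^'n^'n) \<times> (real^'n)"

fun hid_eval :: "(real \<Rightarrow> real) \<Rightarrow> 'n::finite set \<Rightarrow> 'n layer list \<Rightarrow> real^'n
                  \<Rightarrow> ('n set \<times> (real^'n))" where
  "hid_eval act S [] h = (S, h)"
| "hid_eval act S ((T, W, b) # Ls) h =
     hid_eval act T Ls (\<chi> i. act ((\<Sum>j\<in>S. W $ i $ j * h $ j) + b $ i))"

text \<open>Network: hidden layers Ls, then output weights w, output bias c; the activation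
  is applied after every affine map, including the output one
  (nu_kappa o l_kappa o ... o nu_0 o l_0).\<close>
definition net_eval :: "(real \<Rightarrow> real) \<Rightarrow> 'n::finite layer list \<Rightarrow> real^'n \<Rightarrow> real
                         \<Rightarrow> real^'n \<Rightarrow> real" where
  "net_eval act Ls w c x =
     (case hid_eval act UNIV Ls x of (S, h) \<Rightarrow> act ((\<Sum>j\<in>S. w $ j * h $ j) + c))"

definition N_fam :: "(real \<Rightarrow> real) \<Rightarrow> (real^'n::finite \<Rightarrow> real) set" where
  "N_fam act = {f. \<exists>Ls w c. (\<forall>(T, W, b) \<in> set Ls. T \<noteq> {}) \<and> f = net_eval act Ls w c}"

definition N_star :: "(real^'n::finite \<Rightarrow> real) set" where
  "N_star = {f. \<exists>psi Ls w c. continuous_on UNIV psi \<and> inj psi \<and>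
                 (\<forall>(T, W, b) \<in> set Ls. T = UNIV \<and> det W \<noteq> 0) \<and> w \<noteq> 0 \<and>
                 f = net_eval psi Ls w c}"

definition unif_approx_by_inj :: "(real \<Rightarrow> real) \<Rightarrow> bool" where
  "unif_approx_by_inj act \<longleftrightarrow> (\<exists>s :: nat \<Rightarrow> real \<Rightarrow> real.
      (\<forall>k. continuous_on UNIV (s k) \<and> inj (s k)) \<and> uniform_limit UNIV s act sequentially)"

definition approximates :: "('a::topological_space \<Rightarrow> real) set \<Rightarrow> ('a \<Rightarrow> real) \<Rightarrow> bool" where
  "approximates M g \<longleftrightarrow> (\<forall>A e. compact A \<and> e > 0 \<longrightarrow>
      (\<exists>f\<in>M. \<forall>x\<in>A. \<bar>f x - g x\<bar> < e))"

end

theory Submission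
  imports Defs
begin

fun feval :: "(real \<Rightarrow> real) \<Rightarrow> ((real^'n^'n) \<times> (real^'n)) list \<Rightarrow> real^'n \<Rightarrow> real^'n::finite" where
  "feval act [] h = h"
| "feval act ((W, b) # L) h = feval act L (\<chi> i. act ((W *v h) $ i + b $ i))"

definition mask :: "'n::finite set \<Rightarrow> real^'n^'n \<Rightarrow> real^'n^'n" where
  "mask S W = (\<chi> i j. if j \<in> S then W $ i $ j else 0)"

fun conv :: "'n::finite set \<Rightarrow> 'n layer list \<Rightarrow> ((real^'n^'n) \<times> (real^'n)) list" where
  "conv S [] = []"
| "conv S ((T, W, b) # Ls) = (mask S W, b) # conv T Ls"

fun lastS :: "'n::finite set \<Rightarrow> 'n layer list \<Rightarrow> 'n set" where
  "lastS S [] = S"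
| "lastS S ((T, W, b) # Ls) = lastS T Ls"

lemma mask_mult: "(mask S W *v h) $ i = (\<Sum>j\<in>S. W $ i $ j * h $ j)"
proof -
  have "(mask S W *v h) $ i = (\<Sum>j\<in>UNIV. if j \<in> S then W $ i $ j * h $ j else 0)"
    by (auto simp: mask_def matrix_vector_mult_def intro!: sum.cong)
  also have "\<dots> = (\<Sum>j\<in>S. W $ i $ j * h $ j)"
    by (simp add: sum.inter_restrict[symmetric])
  finally show ?thesis .
qed

lemma hid_conv: "hid_eval act S Ls h = (lastS S Ls, feval act (conv S Ls) h)"
proof (induction Ls arbitrary: S h)
  case Nil
  then show ?case by simp
next
  case (Cons a Ls)
  obtain T W b where a: "a = (T, W, b)" by (cases a) auto
  show ?case unfolding a by (simp add: Cons.IH mask_mult)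
qed

lemma hid_full: "hid_eval act UNIV (map (Pair UNIV) L) h = (UNIV, feval act L h)"
proof (induction L arbitrary: h)
  case Nil
  then show ?case by simp
next
  case (Cons a L)
  obtain W b where a: "a = (W, b)" by (cases a) auto
  show ?case unfolding a by (simp add: Cons.IH matrix_vector_mult_def)
qed

lemma net_conv: "net_eval act Ls w c x =
   act (((\<chi> j. if j \<in> lastS UNIV Ls then w $ j else 0) \<bullet> feval act (conv UNIV Ls) x) + c)"
proof -
  have "(\<Sum>j\<in>UNIV. (\<chi> j. if j \<in> lastS UNIV Ls then w $ j else 0) $ j * feval act (conv UNIV Ls) x $ j)
     = (\<Sum>j\<in>UNIV. if j \<in> lastS UNIV Ls then w $ j * feval act (conv UNIV Ls) x $ j else 0)"
    by (auto intro!: sum.cong)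
  also have "\<dots> = (\<Sum>j\<in>lastS UNIV Ls. w $ j * feval act (conv UNIV Ls) x $ j)"
    by (simp add: sum.inter_restrict[symmetric])
  finally show ?thesis by (simp add: net_eval_def hid_conv inner_vec_def)
qed

lemma net_full: "net_eval act (map (Pair UNIV) L) w c x =
   act ((w \<bullet> feval act L x) + c)"
  by (simp add: net_eval_def hid_full inner_vec_def)

lemma det_poly: "real_polynomial_function (\<lambda>d. det (M + d *\<^sub>R mat 1 :: real^'n::finite^'n))"
  unfolding det_def
proof (intro real_polynomial_function_sum real_polynomial_function.intros(4) real_polynomial_function.intros(2)
      real_polynomial_function_prod; simp)
  fix i j :: 'n
  have "real_polynomial_function (\<lambda>d. M $ i $ j + d * (if i = j then 1 else 0))"
    by (intro real_polynomial_function.intros(3) real_polynomial_function.intros(4) real_polynomial_function.intros(2)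
        real_polynomial_function.intros(1) bounded_linear_ident)
  then show "real_polynomial_function (\<lambda>d. M $ i $ j + d * mat 1 $ i $ j)"
    by (simp add: mat_def)
qed

lemma det_somewhere: "\<exists>d. det (M + d *\<^sub>R mat 1 :: real^'n::finite^'n) \<noteq> 0"
proof -
  obtain B where B: "B > 0" "\<And>x. norm (M *v x) \<le> B * norm x"
    using linear_bounded_pos[OF matrix_vector_mul_linear] by blast
  have "inj ((*v) (M + (B + 1) *\<^sub>R mat 1))"
  proof (rule linear_injective_0[THEN iffD2, OF matrix_vector_mul_linear], intro allI impI)
    fix x assume "(M + (B + 1) *\<^sub>R mat 1) *v x = 0"
    then have "M *v x = - ((B + 1) *\<^sub>R x)"
      by (simp add: algebra_simps scaleR_matrix_vector_assoc[symmetric] eq_neg_iff_add_eq_0)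
    then have "(B + 1) * norm x \<le> B * norm x" 
    proof -
      have "norm (M *v x) = (B + 1) * norm x" using \<open>B > 0\<close> by (simp add: \<open>M *v x = _\<close>)
      then show ?thesis using B(2)[of x] by simp
    qed
    then have "norm x \<le> 0" by (simp add: algebra_simps)
    then show "x = 0" by simp
  qed
  then show ?thesis
    using det_nz_iff_inj[OF matrix_vector_mul_linear, of "M + (B + 1) *\<^sub>R mat 1"]
    unfolding matrix_of_matrix_vector_mul by blast
qed

lemma det_bad_finite: "finite {d. det (M + d *\<^sub>R mat 1 :: real^'n::finite^'n) = 0}"
proof -
  obtain a N where aN: "(\<lambda>d. det (M + d *\<^sub>R mat 1 :: real^'n::finite^'n)) = (\<lambda>x. \<Sum>i\<le>N. a i * x^i)"
    using det_poly[of M] real_polynomial_function_iff_sum by blast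
  obtain d0 where d0: "det (M + d0 *\<^sub>R mat 1) \<noteq> 0" using det_somewhere by blast
  have "\<exists>k. k \<le> N \<and> a k \<noteq> 0"
  proof (rule ccontr)
    assume "\<not> ?thesis"
    then have "(\<Sum>i\<le>N. a i * d0^i) = 0" by simp
    with d0 aN show False by metis
  qed
  moreover have e: "\<And>d. det (M + d *\<^sub>R mat 1) = (\<Sum>i\<le>N. a i * d^i)" using aN by metis
  ultimately show ?thesis using polyfun_rootbound_finite by (simp only: e)
qed

definition pert :: "real \<Rightarrow> ((real^'n^'n) \<times> (real^'n)) list \<Rightarrow> ((real^'n^'n) \<times> (real^'n::finite)) list" where
  "pert d L = map (\<lambda>(W, b). (W + d *\<^sub>R mat 1, b)) L"

lemma psi_conv:
  fixes psi :: "nat \<Rightarrow> real \<Rightarrow> real" and act :: "real \<Rightarrow> real"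
  assumes U: "uniform_limit UNIV psi act sequentially" and C: "continuous_on UNIV act"
    and z: "z \<longlonglongrightarrow> z0"
  shows "(\<lambda>k. psi k (z k)) \<longlonglongrightarrow> act z0"
proof -
  have 1: "(\<lambda>k. psi k (z k) - act (z k)) \<longlonglongrightarrow> 0"
  proof (rule tendstoI)
    fix e :: real assume "e > 0"
    with U have "\<forall>\<^sub>F k in sequentially. \<forall>x\<in>UNIV. dist (psi k x) (act x) < e"
      unfolding uniform_limit_iff by blast
    then show "\<forall>\<^sub>F k in sequentially. dist (psi k (z k) - act (z k)) 0 < e"
      by (rule eventually_mono) (simp add: dist_real_def)
  qed
  have 2: "(\<lambda>k. act (z k)) \<longlonglongrightarrow> act z0"
    using C z by (simp add: continuous_on_tendsto_compose)
  have "(\<lambda>k. (psi k (z k) - act (z k)) + act (z k)) \<longlonglongrightarrow> 0 + act z0"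
    by (intro tendsto_add 1 2)
  then show ?thesis by simp
qed

lemma feval_conv:
  fixes psi :: "nat \<Rightarrow> real \<Rightarrow> real" and act :: "real \<Rightarrow> real"
  assumes U: "uniform_limit UNIV psi act sequentially" and C: "continuous_on UNIV act"
    and d: "d \<longlonglongrightarrow> 0"
  shows "xs \<longlonglongrightarrow> x \<Longrightarrow> (\<lambda>k. feval (psi k) (pert (d k) L) (xs k)) \<longlonglongrightarrow> feval act L x"
proof (induction L arbitrary: xs x)
  case Nil
  then show ?case by (simp add: pert_def)
next
  case (Cons a L)
  obtain W b where a: "a = (W, b)" by (cases a) auto
  have "(\<lambda>k. \<chi> i. psi k (((W + d k *\<^sub>R mat 1) *v xs k) $ i + b $ i))
        \<longlonglongrightarrow> (\<chi> i. act ((W *v x) $ i + b $ i))"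
  proof (rule tendsto_vec_lambda)
    fix i
    have e: "\<And>k. (W + d k *\<^sub>R mat 1) *v xs k = W *v xs k + d k *\<^sub>R xs k"
      by (simp add: matrix_vector_mult_add_rdistrib scaleR_matrix_vector_assoc[symmetric])
    have "(\<lambda>k. W *v xs k + d k *\<^sub>R xs k) \<longlonglongrightarrow> W *v x + 0 *\<^sub>R x"
      by (intro tendsto_add tendsto_scaleR d Cons.prems
          bounded_linear.tendsto[OF matrix_vector_mul_bounded_linear])
    then have "(\<lambda>k. ((W + d k *\<^sub>R mat 1) *v xs k) $ i + b $ i) \<longlonglongrightarrow> (W *v x) $ i + b $ i"
      unfolding e by (intro tendsto_add tendsto_const tendsto_vec_nth) simp
    then show "(\<lambda>k. psi k (((W + d k *\<^sub>R mat 1) *v xs k) $ i + b $ i)) \<longlonglongrightarrow> act ((W *v x) $ i + b $ i)"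
      by (rule psi_conv[OF U C])
  qed
  from Cons.IH[OF this] show ?case by (simp add: a pert_def)
qed

lemma out_conv:
  fixes psi :: "nat \<Rightarrow> real \<Rightarrow> real" and act :: "real \<Rightarrow> real"
  assumes U: "uniform_limit UNIV psi act sequentially" and C: "continuous_on UNIV act"
    and d: "d \<longlonglongrightarrow> 0" and w: "wk \<longlonglongrightarrow> w" and xs: "xs \<longlonglongrightarrow> x"
  shows "(\<lambda>k. psi k (wk k \<bullet> feval (psi k) (pert (d k) L) (xs k) + c))
          \<longlonglongrightarrow> act (w \<bullet> feval act L x + c)"
proof (rule psi_conv[OF U C])
  show "(\<lambda>k. wk k \<bullet> feval (psi k) (pert (d k) L) (xs k) + c) \<longlonglongrightarrow> w \<bullet> feval act L x + c"
    by (rule tendsto_add[OF tendsto_inner[OF w feval_conv[OF U C d xs]] tendsto_const])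
qed

lemma pert0: "pert 0 L = L"
  by (induction L) (auto simp: pert_def)

lemma unif_compact:
  fixes psi :: "nat \<Rightarrow> real \<Rightarrow> real" and act :: "real \<Rightarrow> real"
  assumes U: "uniform_limit UNIV psi act sequentially" and C: "continuous_on UNIV act"
    and d: "d \<longlonglongrightarrow> 0" and w: "wk \<longlonglongrightarrow> w" and A: "compact A" and e: "e > 0"
  shows "\<forall>\<^sub>F k in sequentially. \<forall>x\<in>A.
     \<bar>psi k (wk k \<bullet> feval (psi k) (pert (d k) L) x + c) - act (w \<bullet> feval act L x + c)\<bar> < e"
proof (rule ccontr)
  let ?F = "\<lambda>k x. psi k (wk k \<bullet> feval (psi k) (pert (d k) L) x + c)"
  let ?G = "\<lambda>x. act (w \<bullet> feval act L x + c)"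
  assume "\<not> ?thesis"
  from not_eventually_sequentiallyD[OF this]
  obtain r :: "nat \<Rightarrow> nat" where r: "strict_mono r"
    and nr: "\<forall>n. \<not> (\<forall>x\<in>A. \<bar>?F (r n) x - ?G x\<bar> < e)"
    by (elim exE conjE) (rule that, assumption, simp)
  have "\<forall>n. \<exists>x. x \<in> A \<and> \<bar>?F (r n) x - ?G x\<bar> \<ge> e"
  proof
    fix n show "\<exists>x. x \<in> A \<and> \<bar>?F (r n) x - ?G x\<bar> \<ge> e"
      using nr[rule_format, of n] by (auto simp: not_less)
  qed
  from choice[OF this] obtain xs where xs0: "\<forall>n. xs n \<in> A \<and> \<bar>?F (r n) (xs n) - ?G (xs n)\<bar> \<ge> e"
    by (elim exE) (rule that)
  then have xs: "\<And>n. xs n \<in> A" and xse: "\<And>n. \<bar>?F (r n) (xs n) - ?G (xs n)\<bar> \<ge> e"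
    by auto
  have xs': "\<forall>n. xs n \<in> A" using xs by blast
  have "\<exists>l\<in>A. \<exists>r2. strict_mono r2 \<and> (xs \<circ> r2) \<longlonglongrightarrow> l"
    using A xs' unfolding compact_def by blast
  then obtain l r2 where l: "l \<in> A" and r2: "strict_mono r2" and lim: "(xs \<circ> r2) \<longlonglongrightarrow> l"
    by blast
  define q where "q = r \<circ> r2"
  have q: "strict_mono q" unfolding q_def using r r2 by (simp add: strict_mono_o)
  have Uq: "uniform_limit UNIV (\<lambda>k. psi (q k)) act sequentially"
    by (rule filterlim_compose[OF U filterlim_subseq[OF q]])
  have dq: "(\<lambda>k. d (q k)) \<longlonglongrightarrow> 0"
    using LIMSEQ_subseq_LIMSEQ[OF d q] by (simp add: o_def)
  have wq: "(\<lambda>k. wk (q k)) \<longlonglongrightarrow> w"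
    using LIMSEQ_subseq_LIMSEQ[OF w q] by (simp add: o_def)
  have lim': "(\<lambda>k. xs (r2 k)) \<longlonglongrightarrow> l" using lim by (simp add: o_def)
  have 1: "(\<lambda>k. ?F (q k) (xs (r2 k))) \<longlonglongrightarrow> ?G l"
    using out_conv[OF Uq C dq wq lim', of L c] by simp
  have Uc: "uniform_limit UNIV (\<lambda>k. act) act sequentially"
    by (simp add: uniform_limit_iff)
  have 2: "(\<lambda>k. ?G (xs (r2 k))) \<longlonglongrightarrow> ?G l"
  proof -
    have t0: "(\<lambda>k::nat. 0::real) \<longlonglongrightarrow> 0" by simp
    have tw: "(\<lambda>k::nat. w) \<longlonglongrightarrow> w" by simp
    show ?thesis using out_conv[OF Uc C t0 tw lim', of L c] by (simp add: pert0)
  qed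
  have "(\<lambda>k. ?F (q k) (xs (r2 k)) - ?G (xs (r2 k))) \<longlonglongrightarrow> 0"
    using tendsto_diff[OF 1 2] unfolding diff_self .
  from tendstoD[OF this e]
  have "\<forall>\<^sub>F k in sequentially. dist (?F (q k) (xs (r2 k)) - ?G (xs (r2 k))) 0 < e" .
  then obtain N where "\<forall>k\<ge>N. dist (?F (q k) (xs (r2 k)) - ?G (xs (r2 k))) 0 < e"
    unfolding eventually_sequentially by blast
  then obtain k where "dist (?F (q k) (xs (r2 k)) - ?G (xs (r2 k))) 0 < e"
    by blast
  moreover have "\<bar>?F (r (r2 k)) (xs (r2 k)) - ?G (xs (r2 k))\<bar> \<ge> e" by (rule xse)
  ultimately show False unfolding q_def o_def dist_real_def diff_0_right by linarith
qed

lemma net_pert_star: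
  fixes s :: "real \<Rightarrow> real" and L :: "((real^'n^'n) \<times> (real^'n::finite)) list"
  assumes "continuous_on UNIV s" "inj s"
    and "\<forall>(W, b) \<in> set L. det (W + d *\<^sub>R mat 1) \<noteq> 0" and "wv \<noteq> 0"
  shows "net_eval s (map (Pair UNIV) (pert d L)) wv c \<in> N_star"
  unfolding N_star_def
  by (intro CollectI exI[of _ s] exI[of _ "map (Pair UNIV) (pert d L)"] exI[of _ wv] exI[of _ c] conjI)
     (use assms in \<open>auto simp: pert_def\<close>)

theorem lemma1:
  fixes act :: "real \<Rightarrow> real" and g :: "real^'n \<Rightarrow> real"
  assumes "continuous_on UNIV act"
    and "unif_approx_by_inj act"
    and "approximates (N_fam act) g"
  shows "approximates N_star g"
  unfolding approximates_def
proof (intro allI impI, elim conjE)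
  fix A :: "(real^'n) set" and e :: real
  assume A: "compact A" and e: "e > 0"
  have "\<exists>s :: nat \<Rightarrow> real \<Rightarrow> real. (\<forall>k. continuous_on UNIV (s k) \<and> inj (s k)) \<and>
      uniform_limit UNIV s act sequentially"
    using assms(2) unfolding unif_approx_by_inj_def .
  then obtain s :: "nat \<Rightarrow> real \<Rightarrow> real" where s0: "(\<forall>k. continuous_on UNIV (s k) \<and> inj (s k)) \<and>
      uniform_limit UNIV s act sequentially"
    by (elim exE)
  have s: "\<And>k. continuous_on UNIV (s k) \<and> inj (s k)" and U: "uniform_limit UNIV s act sequentially"
    using s0 by simp_all
  have e2: "e / 2 > 0" using e by simp
  have "\<exists>f\<in>N_fam act. \<forall>x\<in>A. \<bar>f x - g x\<bar> < e / 2"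
    by (rule mp[OF assms(3)[unfolded approximates_def, THEN spec, THEN spec] conjI[OF A e2]])
  then obtain f where f: "f \<in> N_fam act" and fg0: "\<forall>x\<in>A. \<bar>f x - g x\<bar> < e / 2"
    by (elim bexE)
  have fg: "\<And>x. x \<in> A \<Longrightarrow> \<bar>f x - g x\<bar> < e / 2" using fg0 by simp
  have "\<exists>Ls w c. (\<forall>(T, W, b) \<in> set Ls. T \<noteq> {}) \<and> f = net_eval act Ls w c"
    using f unfolding N_fam_def by (rule CollectD)
  then obtain Ls w c where fdef0: "(\<forall>(T, W, b) \<in> set Ls. T \<noteq> {}) \<and> f = net_eval act Ls w c"
    by (elim exE)
  have fdef: "f = net_eval act Ls w c" using fdef0 by (rule conjunct2)
  define L where "L = conv UNIV Ls"
  define w' where "w' = (\<chi> j. if j \<in> lastS UNIV Ls then w $ j else 0)"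
  have fx: "\<And>x. f x = act (w' \<bullet> feval act L x + c)"
    unfolding fdef L_def w'_def by (rule net_conv)
  define Bad where "Bad = (\<Union>p\<in>set L. {d. det (fst p + d *\<^sub>R mat 1) = 0})"
  have fin: "finite Bad" unfolding Bad_def by (auto intro: det_bad_finite)
  have "\<forall>k. \<exists>d. d \<in> {0<..<inverse (real (Suc k))} - Bad"
  proof
    fix k
    have "infinite ({0<..<inverse (real (Suc k))} - Bad)"
      using fin by (simp add: Diff_infinite_finite)
    then show "\<exists>d. d \<in> {0<..<inverse (real (Suc k))} - Bad"
      by (metis finite.emptyI ex_in_conv)
  qed
  from choice[OF this] obtain d where d: "\<forall>k. d k \<in> {0<..<inverse (real (Suc k))} - Bad"
    by (elim exE) (rule that)
  have dpos: "\<And>k. d k > 0" and dlt: "\<And>k. d k < inverse (real (Suc k))"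
    and dgood: "\<And>k. d k \<notin> Bad" using d by auto
  have dlim: "d \<longlonglongrightarrow> 0"
  proof (rule tendsto_sandwich[of "\<lambda>k. 0" _ _ "\<lambda>k. inverse (real (Suc k))"])
    show "\<forall>\<^sub>F k in sequentially. 0 \<le> d k" using dpos by (simp add: less_imp_le)
    show "\<forall>\<^sub>F k in sequentially. d k \<le> inverse (real (Suc k))" using dlt by (simp add: less_imp_le)
    show "(\<lambda>k. 0) \<longlonglongrightarrow> (0::real)" by (rule tendsto_const)
    show "(\<lambda>k. inverse (real (Suc k))) \<longlonglongrightarrow> 0" by (rule LIMSEQ_inverse_real_of_nat)
  qed
  define wk where "wk = (\<lambda>k. if w' = 0 then (\<chi> i. d k) else w')"
  have wk_nz: "\<And>k. wk k \<noteq> 0"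
  proof -
    fix k
    have "d k \<noteq> 0" using dpos[of k] by simp
    then show "wk k \<noteq> 0" unfolding wk_def by (auto simp: vec_eq_iff)
  qed
  have wlim: "wk \<longlonglongrightarrow> w'"
  proof (cases "w' = 0")
    case True
    have "(\<lambda>k. \<chi> i. d k) \<longlonglongrightarrow> w'"
    proof (rule vec_tendstoI)
      fix i show "(\<lambda>k. (\<chi> i. d k) $ i) \<longlonglongrightarrow> w' $ i" using dlim True by simp
    qed
    moreover have "wk = (\<lambda>k. \<chi> i. d k)" unfolding wk_def using True by simp
    ultimately show ?thesis by simp
  next
    case False
    then show ?thesis unfolding wk_def by simp
  qed
  have ev: "\<forall>\<^sub>F k in sequentially. \<forall>x\<in>A.
     \<bar>s k (wk k \<bullet> feval (s k) (pert (d k) L) x + c) - act (w' \<bullet> feval act L x + c)\<bar> < e / 2"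
    by (rule unif_compact[OF U assms(1) dlim wlim A e2])
  then obtain k where k: "\<forall>x\<in>A.
     \<bar>s k (wk k \<bullet> feval (s k) (pert (d k) L) x + c) - act (w' \<bullet> feval act L x + c)\<bar> < e / 2"
    unfolding eventually_sequentially by blast
  define F where "F = net_eval (s k) (map (Pair UNIV) (pert (d k) L)) (wk k) c"
  have good: "\<forall>(W, b) \<in> set L. det (W + d k *\<^sub>R mat 1) \<noteq> 0"
  proof (intro ballI, clarify)
    fix W b assume Wb: "(W, b) \<in> set L" and z: "det (W + d k *\<^sub>R mat 1) = 0"
    have "d k \<in> {d. det (fst (W, b) + d *\<^sub>R mat 1) = 0}" using z by simp
    then have "d k \<in> Bad" unfolding Bad_def using Wb by (rule UN_I[rotated])
    then show False using dgood[of k] by contradiction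
  qed
  have FN: "F \<in> N_star"
    unfolding F_def using s[of k] by (intro net_pert_star[OF _ _ good wk_nz[of k]]) simp_all
  have "\<forall>x\<in>A. \<bar>F x - g x\<bar> < e"
  proof
    fix x assume x: "x \<in> A"
    have "F x = s k (wk k \<bullet> feval (s k) (pert (d k) L) x + c)"
      unfolding F_def by (rule net_full)
    then have "\<bar>F x - f x\<bar> < e / 2" using k x fx[of x] by simp
    then show "\<bar>F x - g x\<bar> < e" using fg[OF x] by linarith
  qed
  with FN show "\<exists>f\<in>N_star. \<forall>x\<in>A. \<bar>f x - g x\<bar> < e" by blast
qed

end
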